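(* If $T$ is a tree of maximum degree at most $3$, then $\gamma_e(T)\geq\frac{1}{6}(n(T)+2)$.
   Context: All graphs are finite, simple and undirected; $n(G)=|V(G)|$. For a graph $G$, a set $S\subseteq V(G)$, and vertices $u,v$ with $u\in S$ or $v\in S$, ${\rm dist}_{(G,S)}(u,v)$ is the minimum number of edges of a path $P$ in $G$ between $u$ and $v$ such that $S$ contains exactly one endvertex of $P$ and no internal vertex of $P$, and $\infty$ if no such path exists (so ${\rm dist}_{(G,S)}(u,u)=0$ for $u\in S$). For $u\in V(G)$, $w_{(G,S)}(u)=\sum_{v\in S}(1/2)^{{\rm dist}_{(G,S)}(u,v)-1}$ with $(1/2)^{\infty}=0$. $S$ is an exponential dominating set of $G$ if $w_{(G,S)}(u)\geq 1$ for every $u\in V(G)$, and $\gamma_e(G)$ is the minimum cardinality of an exponential dominating set of $G$. *)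

theory Defs
  imports Complex_Main
begin

definition simple_graph :: "'a set \<Rightarrow> ('a \<Rightarrow> 'a \<Rightarrow> bool) \<Rightarrow> bool" where
  "simple_graph V E \<longleftrightarrow> finite V \<and> (\<forall>x y. E x y \<longrightarrow> x \<in> V \<and> y \<in> V)
     \<and> (\<forall>x y. E x y \<longrightarrow> E y x) \<and> (\<forall>x. \<not> E x x)"

definition gpath :: "'a set \<Rightarrow> ('a \<Rightarrow> 'a \<Rightarrow> bool) \<Rightarrow> 'a list \<Rightarrow> bool" where
  "gpath V E xs \<longleftrightarrow> xs \<noteq> [] \<and> distinct xs \<and> set xs \<subseteq> V \<and> successively E xs"

definition connected_graph :: "'a set \<Rightarrow> ('a \<Rightarrow> 'a \<Rightarrow> bool) \<Rightarrow> bool" where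
  "connected_graph V E \<longleftrightarrow> V \<noteq> {} \<and>
     (\<forall>u\<in>V. \<forall>v\<in>V. \<exists>xs. gpath V E xs \<and> hd xs = u \<and> last xs = v)"

definition has_cycle :: "'a set \<Rightarrow> ('a \<Rightarrow> 'a \<Rightarrow> bool) \<Rightarrow> bool" where
  "has_cycle V E \<longleftrightarrow> (\<exists>xs. gpath V E xs \<and> length xs \<ge> 3 \<and> E (last xs) (hd xs))"

definition tree :: "'a set \<Rightarrow> ('a \<Rightarrow> 'a \<Rightarrow> bool) \<Rightarrow> bool" where
  "tree V E \<longleftrightarrow> simple_graph V E \<and> connected_graph V E \<and> \<not> has_cycle V E"

definition degree :: "'a set \<Rightarrow> ('a \<Rightarrow> 'a \<Rightarrow> bool) \<Rightarrow> 'a \<Rightarrow> nat" where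
  "degree V E v = card {u \<in> V. E v u}"

text \<open>Paths between u and v (of length |xs|-1) such that S contains exactly one endvertex and
  no internal vertex.  For xs = [u] with u in S this gives distance 0.\<close>
definition S_path :: "'a set \<Rightarrow> ('a \<Rightarrow> 'a \<Rightarrow> bool) \<Rightarrow> 'a set \<Rightarrow> 'a \<Rightarrow> 'a \<Rightarrow> 'a list \<Rightarrow> bool" where
  "S_path V E S u v xs \<longleftrightarrow> gpath V E xs \<and> hd xs = u \<and> last xs = v
     \<and> card ({hd xs, last xs} \<inter> S) = 1 \<and> set (butlast (tl xs)) \<inter> S = {}"

text \<open>dist_(G,S)(u,v); None represents infinity.\<close>
definition S_dist :: "'a set \<Rightarrow> ('a \<Rightarrow> 'a \<Rightarrow> bool) \<Rightarrow> 'a set \<Rightarrow> 'a \<Rightarrow> 'a \<Rightarrow> nat option" where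
  "S_dist V E S u v = (if \<exists>xs. S_path V E S u v xs
      then Some (LEAST n. \<exists>xs. S_path V E S u v xs \<and> length xs = Suc n) else None)"

definition exp_weight :: "'a set \<Rightarrow> ('a \<Rightarrow> 'a \<Rightarrow> bool) \<Rightarrow> 'a set \<Rightarrow> 'a \<Rightarrow> real" where
  "exp_weight V E S u = (\<Sum>v\<in>S. case S_dist V E S u v of
       None \<Rightarrow> 0 | Some d \<Rightarrow> (1/2::real) powi (int d - 1))"

definition exp_dominating :: "'a set \<Rightarrow> ('a \<Rightarrow> 'a \<Rightarrow> bool) \<Rightarrow> 'a set \<Rightarrow> bool" where
  "exp_dominating V E S \<longleftrightarrow> S \<subseteq> V \<and> (\<forall>u\<in>V. exp_weight V E S u \<ge> 1)"

definition gamma_e :: "'a set \<Rightarrow> ('a \<Rightarrow> 'a \<Rightarrow> bool) \<Rightarrow> nat" where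
  "gamma_e V E = (LEAST k. \<exists>S. exp_dominating V E S \<and> card S = k)"

end

theory Submission
  imports Defs
begin

lemma gpath_finite:
  assumes "finite V"
  shows "finite {xs. gpath V E xs}"
proof -
  have "{xs. gpath V E xs} \<subseteq> {xs. set xs \<subseteq> V \<and> length xs \<le> card V}"
  proof
    fix xs assume "xs \<in> {xs. gpath V E xs}"
    then have "distinct xs" "set xs \<subseteq> V" by (auto simp: gpath_def)
    then have "length xs \<le> card V" using card_mono[OF assms] distinct_card by metis
    with \<open>set xs \<subseteq> V\<close> show "xs \<in> {xs. set xs \<subseteq> V \<and> length xs \<le> card V}" by simp
  qed
  then show ?thesis using finite_lists_length_le[OF assms] finite_subset by blast
qed

lemma successively_drop: "successively P xs \<Longrightarrow> successively P (drop i xs)"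
  by (induction xs arbitrary: i) (auto simp: successively_Cons drop_Cons' split: nat.splits)

lemma leaf_exists:
  assumes fin: "finite V" and ne: "V \<noteq> {}"
    and irr: "\<forall>x. \<not> E x x" and nc: "\<not> has_cycle V E"
  shows "\<exists>v\<in>V. degree V E v \<le> 1"
proof -
  let ?P = "{xs. gpath V E xs}"
  have finP: "finite ?P" using gpath_finite[OF fin] .
  obtain a where "a \<in> V" using ne by blast
  then have "[a] \<in> ?P" by (simp add: gpath_def)
  then have "length ` ?P \<noteq> {}" by blast
  define m where "m = Max (length ` ?P)"
  have "m \<in> length ` ?P" unfolding m_def using finP \<open>length ` ?P \<noteq> {}\<close> by (intro Max_in) auto
  then obtain xs where xsP: "gpath V E xs" and lxs: "length xs = m" by auto
  have maxl: "length ys \<le> m" if "gpath V E ys" for ys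
    unfolding m_def using finP that by (intro Max_ge) auto
  define x where "x = last xs"
  have xsne: "xs \<noteq> []" and dxs: "distinct xs" and sxs: "set xs \<subseteq> V" and suc: "successively E xs"
    using xsP by (auto simp: gpath_def)
  have xV: "x \<in> V" using sxs xsne unfolding x_def by auto
  show ?thesis
  proof (rule ccontr)
    assume "\<not> ?thesis"
    then have d2: "card {u\<in>V. E x u} \<ge> 2" using xV by (auto simp: degree_def)
    define p where "p = (if length xs \<ge> 2 then xs ! (length xs - 2) else x)"
    have "\<not> {u\<in>V. E x u} \<subseteq> {p}"
    proof
      assume "{u\<in>V. E x u} \<subseteq> {p}"
      then have "card {u\<in>V. E x u} \<le> card {p}" by (intro card_mono) auto
      with d2 show False by simp
    qed
    then obtain w where wV: "w \<in> V" and xw: "E x w" and wp: "w \<noteq> p" by blast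
    show False
    proof (cases "w \<in> set xs")
      case False
      have "gpath V E (xs @ [w])"
        using xsP False wV xw unfolding gpath_def x_def
        by (auto simp: successively_append_iff)
      from maxl[OF this] lxs show False by simp
    next
      case True
      then obtain i where i: "i < length xs" "xs ! i = w" by (auto simp: in_set_conv_nth)
      have lastx: "xs ! (length xs - 1) = x" unfolding x_def using xsne by (simp add: last_conv_nth)
      have "i \<noteq> length xs - 1" using i lastx irr xw by auto
      moreover have "length xs \<ge> 2 \<Longrightarrow> i \<noteq> length xs - 2" using i wp unfolding p_def by auto
      ultimately have i3: "i + 3 \<le> length xs" using i by (cases "length xs \<ge> 2") auto
      define ys where "ys = drop i xs"
      have "gpath V E ys" unfolding ys_def gpath_def using xsP i
        by (auto simp: gpath_def successively_drop dest: in_set_dropD)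
      moreover have "length ys \<ge> 3" using i3 unfolding ys_def by simp
      moreover have "E (last ys) (hd ys)" unfolding ys_def using i xw
        by (simp add: hd_drop_conv_nth x_def)
      ultimately have "has_cycle V E" unfolding has_cycle_def by blast
      with nc show False by simp
    qed
  qed
qed

lemma deg_sum:
  assumes "finite V" "V \<noteq> {}" "\<forall>x y. E x y \<longrightarrow> x \<in> V \<and> y \<in> V"
    "\<forall>x y. E x y \<longrightarrow> E y x" "\<forall>x. \<not> E x x" "\<not> has_cycle V E"
  shows "(\<Sum>x\<in>V. degree V E x) + 2 \<le> 2 * card V"
  using assms
proof (induction "card V" arbitrary: V E)
  case 0
  then show ?case by simp
next
  case (Suc n V E)
  obtain v where vV: "v \<in> V" and dv: "degree V E v \<le> 1"
    using leaf_exists[of V E] Suc.prems by blast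
  show ?case
  proof (cases "V = {v}")
    case True
    have "degree V E v = 0" using True Suc.prems(5) by (simp add: degree_def)
    then show ?thesis using True by simp
  next
    case False
    define V' where "V' = V - {v}"
    define E' where "E' = (\<lambda>x y. E x y \<and> x \<noteq> v \<and> y \<noteq> v)"
    have cV': "card V' = n" using Suc.hyps(2) vV Suc.prems(1) unfolding V'_def by simp
    have "\<not> has_cycle V' E'"
    proof
      assume "has_cycle V' E'"
      then obtain xs where "gpath V' E' xs" "length xs \<ge> 3" "E' (last xs) (hd xs)"
        unfolding has_cycle_def by blast
      then have "gpath V E xs" "E (last xs) (hd xs)"
        unfolding gpath_def V'_def E'_def by (auto elim: successively_mono)
      with \<open>length xs \<ge> 3\<close> Suc.prems(6) show False unfolding has_cycle_def by blast
    qed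
    moreover have "finite V'" "V' \<noteq> {}" using Suc.prems(1) False vV unfolding V'_def by auto
    moreover have "\<forall>x y. E' x y \<longrightarrow> x \<in> V' \<and> y \<in> V'" "\<forall>x y. E' x y \<longrightarrow> E' y x" "\<forall>x. \<not> E' x x"
      using Suc.prems(3,4,5) unfolding V'_def E'_def by blast+
    ultimately have IH: "(\<Sum>x\<in>V'. degree V' E' x) + 2 \<le> 2 * card V'"
      using Suc.hyps(1)[OF cV'[symmetric], of E'] by blast
    have dx: "degree V E x = degree V' E' x + (if E x v then 1 else 0)" if "x \<in> V'" for x
    proof -
      have fin: "finite {u\<in>V. E x u}" using Suc.prems(1) by simp
      have eq: "{u\<in>V'. E' x u} = {u\<in>V. E x u} - {v}" using that unfolding V'_def E'_def by auto
      show ?thesis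
      proof (cases "E x v")
        case True
        then have "v \<in> {u\<in>V. E x u}" using vV by simp
        then have "card {u\<in>V. E x u} = Suc (card ({u\<in>V. E x u} - {v}))"
          by (rule card.remove[OF fin])
        then show ?thesis using True unfolding degree_def eq by simp
      next
        case False
        then have "{u\<in>V. E x u} - {v} = {u\<in>V. E x u}" by auto
        then show ?thesis using False unfolding degree_def eq by simp
      qed
    qed
    have "(\<Sum>x\<in>V'. degree V E x) = (\<Sum>x\<in>V'. degree V' E' x) + (\<Sum>x\<in>V'. (if E x v then 1 else 0))"
      using dx by (simp add: sum.distrib)
    also have "(\<Sum>x\<in>V'. (if E x v then 1 else 0::nat)) = card {x\<in>V'. E x v}"
      using Suc.prems(1) unfolding V'_def by (simp add: sum.If_cases Int_def Collect_conj_eq[symmetric] conj_commute)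
    also have "{x\<in>V'. E x v} = {u\<in>V. E v u}" unfolding V'_def using Suc.prems(4,5) by auto
    finally have s1: "(\<Sum>x\<in>V'. degree V E x) = (\<Sum>x\<in>V'. degree V' E' x) + degree V E v"
      by (simp add: degree_def)
    have "(\<Sum>x\<in>V. degree V E x) = degree V E v + (\<Sum>x\<in>V'. degree V E x)"
      unfolding V'_def using Suc.prems(1) vV by (simp add: sum.remove)
    then show ?thesis using s1 IH dv cV' Suc.hyps(2) by simp
  qed
qed

definition Pth :: "'a set \<Rightarrow> ('a \<Rightarrow> 'a \<Rightarrow> bool) \<Rightarrow> 'a set \<Rightarrow> 'a \<Rightarrow> 'a \<Rightarrow> 'a list set" where
  "Pth V E S u y = {xs. gpath V E xs \<and> 2 \<le> length xs \<and> hd xs = u \<and> xs!1 = y \<and> last xs \<in> S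
      \<and> set (butlast (tl xs)) \<inter> S = {}}"

definition wt :: "'a list \<Rightarrow> real" where "wt xs = (1/2::real)^(length xs - 2)"

definition ff :: "'a set \<Rightarrow> ('a \<Rightarrow> 'a \<Rightarrow> bool) \<Rightarrow> 'a set \<Rightarrow> 'a \<Rightarrow> 'a \<Rightarrow> real" where
  "ff V E S u y = (\<Sum>xs\<in>Pth V E S u y. wt xs)"

lemma Pth_finite: "finite V \<Longrightarrow> finite (Pth V E S u y)"
  by (rule finite_subset[OF _ gpath_finite[of V E]]) (auto simp: Pth_def)

lemma wt_nonneg: "wt xs \<ge> 0" by (simp add: wt_def)

lemma ff_nonneg: "ff V E S u y \<ge> 0"
  unfolding ff_def by (intro sum_nonneg wt_nonneg)

lemma ff_sum:
  assumes "finite V" "finite Z"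
  shows "(\<Sum>z\<in>Z. ff V E S u z) = (\<Sum>xs\<in>(\<Union>z\<in>Z. Pth V E S u z). wt xs)"
  unfolding ff_def
  by (rule sum.UNION_disjoint[symmetric]) (use assms Pth_finite in \<open>auto simp: Pth_def\<close>)

lemma ff_S:
  assumes "finite V" "y \<in> S"
  shows "ff V E S u y \<le> 1"
proof -
  have sub: "Pth V E S u y \<subseteq> {[u,y]}"
  proof
    fix xs assume xs: "xs \<in> Pth V E S u y"
    then obtain a b rest where xe: "xs = a # b # rest"
      by (auto simp: Pth_def) (metis Suc_le_length_iff numeral_2_eq_2)
    with xs have ab: "a = u" "b = y" by (auto simp: Pth_def)
    have "rest = []"
    proof (rule ccontr)
      assume "rest \<noteq> []"
      then have "y \<in> set (butlast (tl xs))" using xe ab by simp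
      with xs assms(2) show False by (auto simp: Pth_def)
    qed
    then show "xs \<in> {[u,y]}" using xe ab by simp
  qed
  have "ff V E S u y \<le> (\<Sum>xs\<in>{[u,y]}. wt xs)"
    unfolding ff_def by (rule sum_mono2) (use sub wt_nonneg in auto)
  also have "\<dots> = 1" by (simp add: wt_def)
  finally show ?thesis .
qed

lemma ff_rec:
  assumes fin: "finite V" and yS: "y \<notin> S"
  shows "ff V E S u y \<le> (1/2) * (\<Sum>z\<in>{z\<in>V. E y z} - {u}. ff V E S y z)"
proof -
  let ?Z = "{z\<in>V. E y z} - {u}"
  let ?U = "\<Union>z\<in>?Z. Pth V E S y z"
  have tlU: "tl xs \<in> ?U" and len3: "length xs \<ge> 3" if xs: "xs \<in> Pth V E S u y" for xs
  proof -
    obtain a b rest where xe: "xs = a # b # rest"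
      using xs by (auto simp: Pth_def) (metis Suc_le_length_iff numeral_2_eq_2)
    with xs have ab: "a = u" "b = y" by (auto simp: Pth_def)
    have "rest \<noteq> []"
    proof
      assume "rest = []"
      then have "last xs = y" using xe ab by simp
      with xs yS show False by (auto simp: Pth_def)
    qed
    then obtain z rest' where re: "rest = z # rest'" by (cases rest) auto
    show "length xs \<ge> 3" using xe re by simp
    have gp: "gpath V E xs" and lS: "last xs \<in> S" and int: "set (butlast (tl xs)) \<inter> S = {}"
      using xs by (auto simp: Pth_def)
    have "gpath V E (y # z # rest')" using gp unfolding xe re ab gpath_def by simp
    moreover have "set (butlast (z # rest')) \<inter> S = {}" using int unfolding xe re ab
      by (auto simp: butlast.simps split: if_splits)
    moreover have "last (y # z # rest') \<in> S" using lS unfolding xe re by simp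
    ultimately have "y # z # rest' \<in> Pth V E S y z" by (simp add: Pth_def)
    moreover have "z \<in> ?Z" using gp unfolding xe re ab gpath_def by auto
    ultimately show "tl xs \<in> ?U" using xe re ab by auto
  qed
  have inj: "inj_on tl (Pth V E S u y)"
  proof (rule inj_onI)
    fix xs ys assume "xs \<in> Pth V E S u y" "ys \<in> Pth V E S u y" "tl xs = tl ys"
    then show "xs = ys" by (auto simp: Pth_def) (metis list.collapse list.size(3) not_numeral_le_zero)
  qed
  have e1: "ff V E S u y = (\<Sum>xs\<in>Pth V E S u y. (1/2) * wt (tl xs))"
    unfolding ff_def
  proof (rule sum.cong[OF refl])
    fix xs assume "xs \<in> Pth V E S u y"
    then have "length xs \<ge> 3" by (rule len3)
    then have "length xs - 2 = Suc (length (tl xs) - 2)" by simp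
    then show "wt xs = (1/2) * wt (tl xs)" unfolding wt_def by simp
  qed
  have e2: "(\<Sum>xs\<in>Pth V E S u y. (1/2) * wt (tl xs)) = (1/2) * (\<Sum>xs\<in>tl ` Pth V E S u y. wt xs)"
    by (simp add: sum_distrib_left sum.reindex[OF inj])
  have e3: "(\<Sum>xs\<in>tl ` Pth V E S u y. wt xs) \<le> (\<Sum>xs\<in>?U. wt xs)"
  proof (rule sum_mono2)
    have "finite ?Z" using fin by simp
    then show "finite ?U" using Pth_finite[OF fin] by simp
    show "tl ` Pth V E S u y \<subseteq> ?U" using tlU by blast
  qed (rule wt_nonneg)
  have e4: "(\<Sum>xs\<in>?U. wt xs) = (\<Sum>z\<in>?Z. ff V E S y z)"
    by (rule ff_sum[symmetric]) (use fin in auto)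
  show ?thesis using e1 e2 e3 e4 by linarith
qed

lemma weight_le:
  assumes fin: "finite V" and SV: "S \<subseteq> V" and uS: "u \<notin> S"
  shows "exp_weight V E S u \<le> (\<Sum>y\<in>{y\<in>V. E u y}. ff V E S u y)"
proof -
  define R where "R = {v\<in>S. \<exists>xs. S_path V E S u v xs}"
  define d where "d v = (LEAST n. \<exists>xs. S_path V E S u v xs \<and> length xs = Suc n)" for v
  define p where "p v = (SOME xs. S_path V E S u v xs \<and> length xs = Suc (d v))" for v
  let ?N = "{y\<in>V. E u y}"
  let ?U = "\<Union>y\<in>?N. Pth V E S u y"
  have finS: "finite S" using fin SV finite_subset by blast
  have pv: "S_path V E S u v (p v) \<and> length (p v) = Suc (d v)" if "v \<in> R" for v
  proof -
    from that obtain xs where "S_path V E S u v xs" unfolding R_def by blast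
    then have "\<exists>n xs. S_path V E S u v xs \<and> length xs = Suc n" by (intro exI[of _ "length xs - 1"]) (auto simp: S_path_def gpath_def)
    then have "\<exists>xs. S_path V E S u v xs \<and> length xs = Suc (d v)" unfolding d_def by (rule LeastI_ex)
    then show ?thesis unfolding p_def by (rule someI_ex)
  qed
  have len2: "length (p v) \<ge> 2" if "v \<in> R" for v
  proof (rule ccontr)
    assume "\<not> ?thesis"
    moreover have "p v \<noteq> []" using pv[OF that] by (auto simp: S_path_def gpath_def)
    ultimately obtain a where "p v = [a]" by (cases "p v"; cases "tl (p v)") auto
    moreover have "v \<in> S" using that unfolding R_def by simp
    ultimately show False using pv[OF that] uS by (auto simp: S_path_def)
  qed
  have pU: "p v \<in> ?U" if vR: "v \<in> R" for v
  proof -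
    have sp: "S_path V E S u v (p v)" using pv[OF vR] by simp
    have vS: "v \<in> S" using vR unfolding R_def by simp
    obtain a b rest where pe: "p v = a # b # rest" using len2[OF vR]
      by (metis Suc_le_length_iff numeral_2_eq_2)
    have "p v \<in> Pth V E S u b" using sp len2[OF vR] vS pe by (auto simp: S_path_def Pth_def)
    moreover have "b \<in> ?N" using sp pe by (auto simp: S_path_def gpath_def)
    ultimately show ?thesis by blast
  qed
  have inj: "inj_on p R"
  proof (rule inj_onI)
    fix v w assume "v \<in> R" "w \<in> R" "p v = p w"
    then show "v = w" using pv by (metis S_path_def)
  qed
  have "exp_weight V E S u = (\<Sum>v\<in>R. wt (p v))"
    unfolding exp_weight_def
  proof (rule sum.mono_neutral_cong_right)
    show "finite S" by (rule finS)
    show "R \<subseteq> S" unfolding R_def by blast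
    show "\<forall>v\<in>S - R. (case S_dist V E S u v of None \<Rightarrow> 0 | Some d \<Rightarrow> (1/2::real) powi (int d - 1)) = 0"
      unfolding R_def S_dist_def by auto
    show "(case S_dist V E S u v of None \<Rightarrow> 0 | Some d \<Rightarrow> (1/2::real) powi (int d - 1)) = wt (p v)"
      if "v \<in> R" for v
    proof -
      have "S_dist V E S u v = Some (d v)" using that unfolding R_def S_dist_def d_def by auto
      moreover have "d v \<ge> 1" using len2[OF that] pv[OF that] by simp
      ultimately show ?thesis using pv[OF that] unfolding wt_def
        by (simp add: power_int_def nat_diff_distrib')
    qed
  qed
  also have "\<dots> = (\<Sum>xs\<in>p ` R. wt xs)" by (simp add: sum.reindex[OF inj])
  also have "\<dots> \<le> (\<Sum>xs\<in>?U. wt xs)"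
  proof (rule sum_mono2)
    have "finite ?N" using fin by simp
    then show "finite ?U" using Pth_finite[OF fin] by simp
    show "p ` R \<subseteq> ?U" using pU by blast
  qed (rule wt_nonneg)
  also have "\<dots> = (\<Sum>y\<in>?N. ff V E S u y)" by (rule ff_sum[symmetric]) (use fin in auto)
  finally show ?thesis .
qed

lemma main_bound:
  assumes sg: "simple_graph V E" and ne: "V \<noteq> {}" and nc: "\<not> has_cycle V E"
    and d3: "\<forall>v\<in>V. degree V E v \<le> 3" and dom: "exp_dominating V E S"
  shows "card V + 2 \<le> 6 * card S"
proof -
  have fin: "finite V" and Ein: "\<forall>x y. E x y \<longrightarrow> x \<in> V \<and> y \<in> V"
    and sym: "\<forall>x y. E x y \<longrightarrow> E y x" and irr: "\<forall>x. \<not> E x x"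
    using sg by (auto simp: simple_graph_def)
  have SV: "S \<subseteq> V" using dom by (simp add: exp_dominating_def)
  have finS: "finite S" using fin SV finite_subset by blast
  define N where "N y = {z\<in>V. E y z}" for y
  define out where "out y = (\<Sum>z\<in>N y. ff V E S y z)" for y
  define inn where "inn y = (\<Sum>u\<in>N y. ff V E S u y)" for y
  define dg where "dg y = real (degree V E y)" for y
  have finN: "finite (N y)" for y using fin unfolding N_def by simp
  have cardN: "real (card (N y)) = dg y" for y unfolding N_def dg_def degree_def by simp
  have swap: "(\<Sum>y\<in>V. out y) = (\<Sum>y\<in>V. inn y)"
  proof -
    have "(\<Sum>y\<in>V. out y) = (\<Sum>z\<in>V. \<Sum>y\<in>{y. y \<in> V \<and> E y z}. ff V E S y z)"
      unfolding out_def N_def using sum.swap_restrict[OF fin fin, of "\<lambda>y z. ff V E S y z" E]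
      by simp
    also have "\<dots> = (\<Sum>y\<in>V. inn y)"
      unfolding inn_def N_def
      by (rule sum.cong[OF refl], rule sum.cong) (use sym in auto)
    finally show ?thesis .
  qed
  have outS: "out y \<ge> 0" for y unfolding out_def by (intro sum_nonneg ff_nonneg)
  have innS: "inn y \<le> dg y" if "y \<in> S" for y
  proof -
    have "inn y \<le> (\<Sum>u\<in>N y. 1)" unfolding inn_def
      by (rule sum_mono) (use ff_S[OF fin that] in auto)
    then show ?thesis using cardN by simp
  qed
  have out1: "out y \<ge> 1" if "y \<in> V - S" for y
  proof -
    have "1 \<le> exp_weight V E S y" using dom that by (auto simp: exp_dominating_def)
    also have "\<dots> \<le> out y" unfolding out_def N_def using weight_le[OF fin SV] that by simp
    finally show ?thesis .
  qed
  have innN: "2 * inn y \<le> (dg y - 1) * out y" if "y \<in> V - S" for y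
  proof -
    have "inn y \<le> (\<Sum>u\<in>N y. (1/2) * (\<Sum>z\<in>N y - {u}. ff V E S y z))"
      unfolding inn_def
      by (rule sum_mono) (use ff_rec[OF fin, of y S] that in \<open>auto simp: N_def\<close>)
    also have "\<dots> = (\<Sum>u\<in>N y. (1/2) * (out y - ff V E S y u))"
      by (rule sum.cong[OF refl]) (simp add: sum_diff1[OF finN] out_def)
    also have "\<dots> = (1/2) * (dg y * out y - out y)"
    proof -
      have "(\<Sum>u\<in>N y. (1/2) * (out y - ff V E S y u)) = (1/2) * (\<Sum>u\<in>N y. out y - ff V E S y u)"
        by (rule sum_distrib_left[symmetric])
      also have "(\<Sum>u\<in>N y. out y - ff V E S y u) = real (card (N y)) * out y - out y"
        by (simp add: sum_subtractf out_def)
      finally show ?thesis using cardN by simp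
    qed
    finally show ?thesis by (simp add: algebra_simps)
  qed
  have dg3: "dg y \<le> 3" if "y \<in> V" for y using d3 that unfolding dg_def by simp
  have A: "3 - dg y \<le> 2 * (out y - inn y)" if "y \<in> V - S" for y
  proof -
    have "(3 - dg y) * 1 \<le> (3 - dg y) * out y"
      by (rule mult_left_mono) (use out1[OF that] dg3 that in auto)
    then show ?thesis using innN[OF that] by (simp add: algebra_simps)
  qed
  have B: "- dg y \<le> out y - inn y" if "y \<in> S" for y using innS[OF that] outS[of y] by simp
  have split: "(\<Sum>y\<in>V. g y) = (\<Sum>y\<in>V - S. g y) + (\<Sum>y\<in>S. g y)" for g :: "'a \<Rightarrow> real"
    using sum.subset_diff[OF SV fin] by simp
  have z: "(\<Sum>y\<in>V. out y - inn y) = 0" using swap by (simp add: sum_subtractf)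
  have F1: "(\<Sum>y\<in>V - S. 3 - dg y) \<le> 2 * (\<Sum>y\<in>S. dg y)"
  proof -
    have "(\<Sum>y\<in>V - S. 3 - dg y) \<le> (\<Sum>y\<in>V - S. 2 * (out y - inn y))" by (rule sum_mono) (rule A)
    moreover have "(\<Sum>y\<in>S. - dg y) \<le> (\<Sum>y\<in>S. out y - inn y)" by (rule sum_mono) (rule B)
    moreover have "(\<Sum>y\<in>V - S. 2 * (out y - inn y)) = 2 * (\<Sum>y\<in>V - S. out y - inn y)"
      by (rule sum_distrib_left[symmetric])
    moreover have "(\<Sum>y\<in>S. - dg y) = - (\<Sum>y\<in>S. dg y)" by (rule sum_negf)
    ultimately show ?thesis using z split[of "\<lambda>y. out y - inn y"] by linarith
  qed
  have F3: "(\<Sum>y\<in>V. dg y) + 2 \<le> 2 * real (card V)"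
  proof -
    have "(\<Sum>x\<in>V. degree V E x) + 2 \<le> 2 * card V" using deg_sum[OF fin ne] Ein sym irr nc by blast
    then have "real ((\<Sum>x\<in>V. degree V E x) + 2) \<le> real (2 * card V)" by (simp only: of_nat_le_iff)
    then show ?thesis unfolding dg_def by simp
  qed
  have F4: "(\<Sum>y\<in>S. dg y) \<le> 3 * real (card S)"
  proof -
    have "(\<Sum>y\<in>S. dg y) \<le> (\<Sum>y\<in>S. 3)" by (rule sum_mono) (use dg3 SV in auto)
    then show ?thesis by simp
  qed
  have cVS: "real (card (V - S)) = real (card V) - real (card S)"
    using card_Diff_subset[OF finS SV] card_mono[OF fin SV] by simp
  have "(\<Sum>y\<in>V - S. 3 - dg y) = 3 * real (card (V - S)) - (\<Sum>y\<in>V - S. dg y)"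
    by (simp add: sum_subtractf)
  then have "real (card V + 2) \<le> real (6 * card S)"
    using F1 F3 F4 cVS split[of dg] by simp
  then show ?thesis by (simp only: of_nat_le_iff)
qed

lemma V_dominating:
  assumes sg: "simple_graph V E"
  shows "exp_dominating V E V"
  unfolding exp_dominating_def
proof (intro conjI ballI subset_refl)
  fix u assume uV: "u \<in> V"
  have fin: "finite V" using sg by (simp add: simple_graph_def)
  have "S_path V E V u u [u]" using uV by (simp add: S_path_def gpath_def)
  then have "S_dist V E V u u = Some 0" unfolding S_dist_def
    by (auto intro!: Least_eq_0)
  then have t: "(case S_dist V E V u u of None \<Rightarrow> 0 | Some d \<Rightarrow> (1/2::real) powi (int d - 1)) = 2"
    by simp
  have "(case S_dist V E V u u of None \<Rightarrow> 0 | Some d \<Rightarrow> (1/2::real) powi (int d - 1))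
      \<le> exp_weight V E V u"
    unfolding exp_weight_def
    by (rule member_le_sum[OF uV _ fin]) (auto split: option.splits)
  then show "1 \<le> exp_weight V E V u" using t by simp
qed

theorem theorem4:
  fixes V :: "'a set" and E :: "'a \<Rightarrow> 'a \<Rightarrow> bool"
  assumes "tree V E"
    and "\<forall>v\<in>V. degree V E v \<le> 3"
  shows "real (gamma_e V E) \<ge> (real (card V) + 2) / 6"
proof -
  have sg: "simple_graph V E" and ne: "V \<noteq> {}" and nc: "\<not> has_cycle V E"
    using assms(1) by (auto simp: tree_def connected_graph_def)
  have "\<exists>k S. exp_dominating V E S \<and> card S = k" using V_dominating[OF sg] by blast
  then have "\<exists>S. exp_dominating V E S \<and> card S = gamma_e V E"
    unfolding gamma_e_def by (rule LeastI_ex)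
  then obtain S where S: "exp_dominating V E S" "card S = gamma_e V E" by blast
  have "card V + 2 \<le> 6 * card S" by (rule main_bound[OF sg ne nc assms(2) S(1)])
  then have "real (card V + 2) \<le> real (6 * card S)" by (simp only: of_nat_le_iff)
  then show ?thesis using S(2) by simp
qed

end
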